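(* Let $s\in\frac12\mathbb{Z}_{>0}$, let $\mathcal{H}=\mathrm{span}\{|s,m\rangle\}_{m=-s}^{s}$ carry the spin-$s$ irreducible representation of $\mathbb{SU}(2)$, and let $\rho_{\mathrm{GHZ}}=|\mathrm{GHZ}\rangle\langle\mathrm{GHZ}|$ with $|\mathrm{GHZ}\rangle=\frac1{\sqrt2}(|s,s\rangle+|s,-s\rangle)$. Then for every $\alpha\in\{0,1,\dots,2s-1\}$: $\mathcal{P}_\alpha(\rho_{\mathrm{GHZ}})=\left(c^{s,s,\alpha}_{s,-s,0}\right)^2$ if $\alpha$ is even, and $\mathcal{P}_\alpha(\rho_{\mathrm{GHZ}})=0$ if $\alpha$ is odd.
   Context: Under the conjugation action $A\mapsto R(g)AR(g)^\dagger$, $\mathcal{L}(\mathcal{H})=\bigoplus_{\alpha=0}^{2s}\mathcal{L}_\alpha$ where $\mathcal{L}_\alpha$ is the unique invariant subspace carrying the spin-$\alpha$ irreducible representation. $c^{s_1,s_2,S}_{m_1,m_2,M}=\langle s_1,m_1;s_2,m_2|S,M\rangle$ denotes the Clebsch–Gordan coefficient. The GFD purity is $\mathcal{P}_\alpha(\rho)=\sum_\mu|\mathrm{Tr}[(B^\mu)^\dagger\rho]|^2$ for any Hilbert–Schmidt orthonormal basis $\{B^\mu\}$ of $\mathcal{L}_\alpha$. *)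

theory Defs
  imports Complex_Main
begin

text \<open>The spin is s = d/2 with d = 2s a positive natural number.
  The Hilbert space H = span{|s,m>} is modelled as C^(d+1), with basis index
  k in {0..d} corresponding to m = k - d/2 (so k = 0 is |s,-s>, k = d is |s,s>).
  Operators on H are functions nat => nat => complex, only the entries with
  indices in {0..d} being meaningful (we require them to vanish elsewhere).\<close>

type_synonym op = "nat \<Rightarrow> nat \<Rightarrow> complex"

definition is_op :: "nat \<Rightarrow> op \<Rightarrow> bool" where
  "is_op d A \<longleftrightarrow> (\<forall>i j. (d < i \<or> d < j) \<longrightarrow> A i j = 0)"

definition mmul :: "nat \<Rightarrow> op \<Rightarrow> op \<Rightarrow> op" where
  "mmul d A B = (\<lambda>i j. \<Sum>k\<le>d. A i k * B k j)"

definition comm :: "nat \<Rightarrow> op \<Rightarrow> op \<Rightarrow> op" where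
  "comm d A B = (\<lambda>i j. mmul d A B i j - mmul d B A i j)"

definition hs_inner :: "nat \<Rightarrow> op \<Rightarrow> op \<Rightarrow> complex" where
  "hs_inner d A B = (\<Sum>i\<le>d. \<Sum>j\<le>d. cnj (A i j) * B i j)"

text \<open>Spin-s angular momentum operators (standard Condon--Shortley convention).\<close>
definition mval :: "nat \<Rightarrow> nat \<Rightarrow> real" where
  "mval d k = real k - real d / 2"

definition Jz :: "nat \<Rightarrow> op" where
  "Jz d = (\<lambda>i j. if i = j \<and> i \<le> d then complex_of_real (mval d j) else 0)"

definition Jplus :: "nat \<Rightarrow> op" where
  "Jplus d = (\<lambda>i j. if j < d \<and> i = j + 1 then
      complex_of_real (sqrt ((real d / 2) * (real d / 2 + 1) - mval d j * (mval d j + 1)))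
      else 0)"

definition Jminus :: "nat \<Rightarrow> op" where
  "Jminus d = (\<lambda>i j. Jplus d j i)"

definition Jx :: "nat \<Rightarrow> op" where
  "Jx d = (\<lambda>i j. (Jplus d i j + Jminus d i j) / 2)"

definition Jy :: "nat \<Rightarrow> op" where
  "Jy d = (\<lambda>i j. (Jplus d i j - Jminus d i j) / (2 * \<i>))"

definition casimir_ad :: "nat \<Rightarrow> op \<Rightarrow> op" where
  "casimir_ad d A = (\<lambda>i j. comm d (Jx d) (comm d (Jx d) A) i j
                        + comm d (Jy d) (comm d (Jy d) A) i j
                        + comm d (Jz d) (comm d (Jz d) A) i j)"

text \<open>L_alpha: the spin-alpha component of L(H) under conjugation, i.e. the
  eigenspace of the adjoint Casimir with eigenvalue alpha(alpha+1).
  (Since L(H) is multiplicity free, this is the unique invariant subspace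
  carrying the spin-alpha irrep.)\<close>
definition Lsub :: "nat \<Rightarrow> nat \<Rightarrow> op set" where
  "Lsub d \<alpha> = {A. is_op d A \<and>
      casimir_ad d A = (\<lambda>i j. complex_of_real (real \<alpha> * (real \<alpha> + 1)) * A i j)}"

definition hs_onb :: "nat \<Rightarrow> op set \<Rightarrow> op list \<Rightarrow> bool" where
  "hs_onb d V Bs \<longleftrightarrow>
     set Bs \<subseteq> V \<and>
     (\<forall>\<mu><length Bs. \<forall>\<nu><length Bs.
        hs_inner d (Bs ! \<mu>) (Bs ! \<nu>) = (if \<mu> = \<nu> then 1 else 0)) \<and>
     (\<forall>A\<in>V. \<exists>c :: nat \<Rightarrow> complex.
        A = (\<lambda>i j. \<Sum>\<mu><length Bs. c \<mu> * (Bs ! \<mu>) i j))"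

definition gfd_sum :: "nat \<Rightarrow> op list \<Rightarrow> op \<Rightarrow> real" where
  "gfd_sum d Bs \<rho> = (\<Sum>\<mu><length Bs. (cmod (hs_inner d (Bs ! \<mu>) \<rho>))\<^sup>2)"

definition ghz :: "nat \<Rightarrow> nat \<Rightarrow> complex" where
  "ghz d k = (if k = 0 \<or> k = d then complex_of_real (1 / sqrt 2) else 0)"

definition rho_ghz :: "nat \<Rightarrow> op" where
  "rho_ghz d = (\<lambda>i j. ghz d i * cnj (ghz d j))"

text \<open>Clebsch--Gordan coefficients <j1,m1;j2,m2|J,M> via Racah's formula.
  All arguments are given DOUBLED (as integers), e.g. cg (2 j1) (2 j2) (2 J) (2 m1) (2 m2) (2 M).\<close>
definition hf :: "int \<Rightarrow> real" where
  "hf x = fact (nat (x div 2))"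

definition cg_valid :: "int \<Rightarrow> int \<Rightarrow> int \<Rightarrow> int \<Rightarrow> int \<Rightarrow> int \<Rightarrow> bool" where
  "cg_valid tj1 tj2 tJ tm1 tm2 tM \<longleftrightarrow>
     0 \<le> tj1 \<and> 0 \<le> tj2 \<and> 0 \<le> tJ \<and>
     \<bar>tm1\<bar> \<le> tj1 \<and> \<bar>tm2\<bar> \<le> tj2 \<and> \<bar>tM\<bar> \<le> tJ \<and>
     even (tj1 - tm1) \<and> even (tj2 - tm2) \<and> even (tJ - tM) \<and>
     \<bar>tj1 - tj2\<bar> \<le> tJ \<and> tJ \<le> tj1 + tj2 \<and> even (tj1 + tj2 + tJ) \<and>
     tM = tm1 + tm2"

definition cg :: "int \<Rightarrow> int \<Rightarrow> int \<Rightarrow> int \<Rightarrow> int \<Rightarrow> int \<Rightarrow> real" where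
  "cg tj1 tj2 tJ tm1 tm2 tM =
    (if cg_valid tj1 tj2 tJ tm1 tm2 tM then
       sqrt (real_of_int (tJ + 1) * hf (tJ + tj1 - tj2) * hf (tJ - tj1 + tj2) * hf (tj1 + tj2 - tJ)
             / hf (tj1 + tj2 + tJ + 2))
     * sqrt (hf (tJ + tM) * hf (tJ - tM) * hf (tj1 - tm1) * hf (tj1 + tm1)
             * hf (tj2 - tm2) * hf (tj2 + tm2))
     * (\<Sum>k\<in>{k::nat. 2 * int k \<le> tj1 + tj2 - tJ \<and> 2 * int k \<le> tj1 - tm1 \<and>
                       2 * int k \<le> tj2 + tm2 \<and> 0 \<le> tJ - tj2 + tm1 + 2 * int k \<and>
                       0 \<le> tJ - tj1 - tm2 + 2 * int k}.
          (-1) ^ k / (fact k * hf (tj1 + tj2 - tJ - 2 * int k) * hf (tj1 - tm1 - 2 * int k)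
                      * hf (tj2 + tm2 - 2 * int k) * hf (tJ - tj2 + tm1 + 2 * int k)
                      * hf (tJ - tj1 - tm2 + 2 * int k)))
     else 0)"

end

theory Submission
  imports Defs "HOL-Computational_Algebra.Formal_Power_Series"
begin

definition aa :: "nat \<Rightarrow> nat \<Rightarrow> real" where
  "aa d k = sqrt ((real d / 2) * (real d / 2 + 1) - mval d k * (mval d k + 1))"

lemma aa_sq: "k \<le> d \<Longrightarrow> aa d k * aa d k = real (d - k) * real (k + 1)"
proof -
  assume k: "k \<le> d"
  have e: "(real d / 2) * (real d / 2 + 1) - mval d k * (mval d k + 1) = real (d - k) * real (k + 1)"
    using k by (simp add: mval_def of_nat_diff field_simps)
  have "0 \<le> real (d - k) * real (k + 1)" by simp
  then show ?thesis unfolding aa_def e by simp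
qed

lemma Jplus_aa: "Jplus d i j = (if j < d \<and> i = j + 1 then complex_of_real (aa d j) else 0)"
  by (simp add: Jplus_def aa_def)

lemma sum_single: "(\<Sum>k\<le>d. (if k = c then f k else 0)) = (if c \<le> (d::nat) then f c else (0::'a::comm_monoid_add))"
  using sum.delta[of "{..d}" c f] by simp

lemma mmul_Jplus_left: "mmul d (Jplus d) X i j =
   (if 1 \<le> i \<and> i \<le> d then complex_of_real (aa d (i - 1)) * X (i - 1) j else 0)"
proof -
  have "(\<lambda>k. Jplus d i k * X k j) = (\<lambda>k. if k = i - 1 then
     (if 1 \<le> i \<and> i \<le> d then complex_of_real (aa d (i - 1)) * X (i - 1) j else 0) else 0)"
    by (rule ext) (auto simp: Jplus_aa)
  then show ?thesis unfolding mmul_def by (simp only: sum_single) auto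
qed

lemma mmul_Jplus_right: "mmul d X (Jplus d) i j =
   (if j < d then X i (j + 1) * complex_of_real (aa d j) else 0)"
proof -
  have "(\<lambda>k. X i k * Jplus d k j) = (\<lambda>k. if k = j + 1 then
     (if j < d then X i (j + 1) * complex_of_real (aa d j) else 0) else 0)"
    by (rule ext) (auto simp: Jplus_aa)
  then show ?thesis unfolding mmul_def by (simp only: sum_single) auto
qed

lemma mmul_Jminus_left: "mmul d (Jminus d) X i j =
   (if i < d then complex_of_real (aa d i) * X (i + 1) j else 0)"
proof -
  have "(\<lambda>k. Jminus d i k * X k j) = (\<lambda>k. if k = i + 1 then
     (if i < d then complex_of_real (aa d i) * X (i + 1) j else 0) else 0)"
    by (rule ext) (auto simp: Jplus_aa Jminus_def)
  then show ?thesis unfolding mmul_def by (simp only: sum_single) auto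
qed

lemma mmul_Jminus_right: "mmul d X (Jminus d) i j =
   (if 1 \<le> j \<and> j \<le> d then X i (j - 1) * complex_of_real (aa d (j - 1)) else 0)"
proof -
  have "(\<lambda>k. X i k * Jminus d k j) = (\<lambda>k. if k = j - 1 then
     (if 1 \<le> j \<and> j \<le> d then X i (j - 1) * complex_of_real (aa d (j - 1)) else 0) else 0)"
    by (rule ext) (auto simp: Jplus_aa Jminus_def)
  then show ?thesis unfolding mmul_def by (simp only: sum_single) auto
qed

lemma mmul_Jz_left: "mmul d (Jz d) X i j = (if i \<le> d then complex_of_real (mval d i) * X i j else 0)"
proof -
  have "(\<lambda>k. Jz d i k * X k j) = (\<lambda>k. if k = i then
     (if i \<le> d then complex_of_real (mval d i) * X i j else 0) else 0)"
    by (rule ext) (auto simp: Jz_def)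
  then show ?thesis unfolding mmul_def by (simp only: sum_single) auto
qed

lemma mmul_Jz_right: "mmul d X (Jz d) i j = (if j \<le> d then X i j * complex_of_real (mval d j) else 0)"
proof -
  have "(\<lambda>k. X i k * Jz d k j) = (\<lambda>k. if k = j then
     (if j \<le> d then X i j * complex_of_real (mval d j) else 0) else 0)"
    by (rule ext) (auto simp: Jz_def)
  then show ?thesis unfolding mmul_def by (simp only: sum_single) auto
qed

lemma mmul_Jx_left: "mmul d (Jx d) X i j = (mmul d (Jplus d) X i j + mmul d (Jminus d) X i j) / 2"
  unfolding mmul_def Jx_def by (simp add: sum_divide_distrib[symmetric] sum.distrib[symmetric] algebra_simps)
lemma mmul_Jx_right: "mmul d X (Jx d) i j = (mmul d X (Jplus d) i j + mmul d X (Jminus d) i j) / 2"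
  unfolding mmul_def Jx_def by (simp add: sum_divide_distrib[symmetric] sum.distrib[symmetric] algebra_simps)
lemma mmul_Jy_left: "mmul d (Jy d) X i j = (mmul d (Jplus d) X i j - mmul d (Jminus d) X i j) / (2*\<i>)"
  unfolding mmul_def Jy_def by (simp add: sum_divide_distrib[symmetric] sum_subtractf[symmetric] algebra_simps)
lemma mmul_Jy_right: "mmul d X (Jy d) i j = (mmul d X (Jplus d) i j - mmul d X (Jminus d) i j) / (2*\<i>)"
  unfolding mmul_def Jy_def by (simp add: sum_divide_distrib[symmetric] sum_subtractf[symmetric] algebra_simps)

definition cas_formula :: "nat \<Rightarrow> op \<Rightarrow> op" where
  "cas_formula d A = (\<lambda>i j. if i \<le> d \<and> j \<le> d then
     complex_of_real (real d * (real d + 2) / 2 - 2 * mval d i * mval d j) * A i j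
     - (if 1 \<le> i \<and> 1 \<le> j then complex_of_real (aa d (i - 1) * aa d (j - 1)) * A (i - 1) (j - 1) else 0)
     - (if i < d \<and> j < d then complex_of_real (aa d i * aa d j) * A (i + 1) (j + 1) else 0)
   else 0)"

lemmas mm = mmul_Jx_left mmul_Jx_right mmul_Jy_left mmul_Jy_right mmul_Jz_left mmul_Jz_right
  mmul_Jplus_left mmul_Jplus_right mmul_Jminus_left mmul_Jminus_right

lemma aa_sqc: "k \<le> d \<Longrightarrow> complex_of_real (aa d k) * complex_of_real (aa d k) = of_nat (d - k) * of_nat (k + 1)"
  by (metis aa_sq of_real_mult of_real_of_nat_eq)
lemma aa_sqc2: "k \<le> d \<Longrightarrow> complex_of_real (aa d k) * (complex_of_real (aa d k) * z) = of_nat (d - k) * of_nat (k + 1) * z"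
  by (metis aa_sqc mult.assoc)

lemma cas_in_mid:
  assumes "i = Suc i'" "i < d" "j = Suc j'" "j < d"
  shows "casimir_ad d A i j = cas_formula d A i j"
  using assms
  apply (simp add: casimir_ad_def comm_def mm cas_formula_def)
  apply (simp add: field_simps aa_sqc aa_sqc2 mval_def)
  done

lemma idx_cases:
  assumes "i \<le> d"
  obtains "i = 0" "d = 0" | "i = 0" "0 < d" | i' where "i = Suc i'" "Suc i' < d" | i' where "i = Suc i'" "d = Suc i'"
  using assms by (cases i; cases "i < d") auto

lemma cas_in:
  assumes "i \<le> d" "j \<le> d"
  shows "casimir_ad d A i j = cas_formula d A i j"
  using assms(1)
proof (cases rule: idx_cases)
  case 1 then show ?thesis using assms(2)
    by (simp add: casimir_ad_def comm_def mm cas_formula_def mval_def)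
next
  case 2
  from assms(2) show ?thesis
  proof (cases rule: idx_cases)
    case 1 then show ?thesis using \<open>0 < d\<close> by simp
  qed (use 2 in \<open>simp_all add: casimir_ad_def comm_def mm cas_formula_def; simp add: field_simps aa_sqc aa_sqc2 mval_def\<close>)+
next
  case (3 i')
  from assms(2) show ?thesis
  proof (cases rule: idx_cases)
    case 1 then show ?thesis using 3 by simp
  qed (use 3 in \<open>simp_all add: casimir_ad_def comm_def mm cas_formula_def; simp add: field_simps aa_sqc aa_sqc2 mval_def\<close>)+
next
  case (4 i')
  from assms(2) show ?thesis
  proof (cases rule: idx_cases)
    case 1 then show ?thesis using 4 by simp
  qed (use 4 in \<open>simp_all add: casimir_ad_def comm_def mm cas_formula_def; simp add: field_simps aa_sqc aa_sqc2 mval_def\<close>)+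
qed

lemma cas_out:
  assumes "is_op d A" "\<not> (i \<le> d \<and> j \<le> d)"
  shows "casimir_ad d A i j = 0"
proof -
  have z1: "\<And>x y. d < x \<Longrightarrow> A x y = 0" and z2: "\<And>x y. d < y \<Longrightarrow> A x y = 0"
    using assms(1) by (auto simp: is_op_def)
  show ?thesis using assms(2)
    by (auto simp: casimir_ad_def comm_def mm z1 z2)
qed

lemma cas_eq: "is_op d A \<Longrightarrow> casimir_ad d A i j = cas_formula d A i j"
  using cas_in[of i d j A] cas_out[of d A i j] by (auto simp: cas_formula_def)

definition herm :: "op \<Rightarrow> bool" where "herm J \<longleftrightarrow> (\<forall>i j. cnj (J j i) = J i j)"

lemma hs_mmul_left:
  assumes "herm J"
  shows "hs_inner d (mmul d J A) B = hs_inner d A (mmul d J B)"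
proof -
  have h: "\<And>i k. cnj (J i k) = J k i" using assms by (auto simp: herm_def)
  have "hs_inner d (mmul d J A) B = (\<Sum>i\<le>d. \<Sum>j\<le>d. \<Sum>k\<le>d. J k i * cnj (A k j) * B i j)"
    unfolding hs_inner_def mmul_def by (simp add: h sum_distrib_right)
  also have "\<dots> = (\<Sum>i\<le>d. \<Sum>k\<le>d. \<Sum>j\<le>d. J k i * cnj (A k j) * B i j)"
    by (rule sum.cong[OF refl], rule sum.swap)
  also have "\<dots> = (\<Sum>k\<le>d. \<Sum>i\<le>d. \<Sum>j\<le>d. J k i * cnj (A k j) * B i j)"
    by (rule sum.swap)
  also have "\<dots> = (\<Sum>k\<le>d. \<Sum>j\<le>d. \<Sum>i\<le>d. J k i * cnj (A k j) * B i j)"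
    by (rule sum.cong[OF refl], rule sum.swap)
  also have "\<dots> = hs_inner d A (mmul d J B)"
    unfolding hs_inner_def mmul_def by (simp add: sum_distrib_left algebra_simps)
  finally show ?thesis .
qed

lemma hs_mmul_right:
  assumes "herm J"
  shows "hs_inner d (mmul d A J) B = hs_inner d A (mmul d B J)"
proof -
  have h: "\<And>i k. cnj (J i k) = J k i" using assms by (auto simp: herm_def)
  have "hs_inner d (mmul d A J) B = (\<Sum>i\<le>d. \<Sum>j\<le>d. \<Sum>k\<le>d. cnj (A i k) * J j k * B i j)"
    unfolding hs_inner_def mmul_def by (simp add: h sum_distrib_right)
  also have "\<dots> = (\<Sum>i\<le>d. \<Sum>k\<le>d. \<Sum>j\<le>d. cnj (A i k) * J j k * B i j)"
    by (rule sum.cong[OF refl], rule sum.swap)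
  also have "\<dots> = hs_inner d A (mmul d B J)"
    unfolding hs_inner_def mmul_def by (simp add: sum_distrib_left algebra_simps)
  finally show ?thesis .
qed

lemma hs_diff_left: "hs_inner d (\<lambda>i j. X i j - Y i j) B = hs_inner d X B - hs_inner d Y B"
  unfolding hs_inner_def by (simp add: algebra_simps sum_subtractf)
lemma hs_diff_right: "hs_inner d A (\<lambda>i j. X i j - Y i j) = hs_inner d A X - hs_inner d A Y"
  unfolding hs_inner_def by (simp add: algebra_simps sum_subtractf)
lemma hs_add_left: "hs_inner d (\<lambda>i j. X i j + Y i j) B = hs_inner d X B + hs_inner d Y B"
  unfolding hs_inner_def by (simp add: algebra_simps sum.distrib)
lemma hs_add_right: "hs_inner d A (\<lambda>i j. X i j + Y i j) = hs_inner d A X + hs_inner d A Y"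
  unfolding hs_inner_def by (simp add: algebra_simps sum.distrib)

lemma hs_comm:
  assumes "herm J"
  shows "hs_inner d (comm d J A) B = hs_inner d A (comm d J B)"
  unfolding comm_def hs_diff_left hs_diff_right
  using hs_mmul_left[OF assms] hs_mmul_right[OF assms] by simp

lemma herm_Jz: "herm (Jz d)" by (auto simp: herm_def Jz_def)
lemma herm_Jx: "herm (Jx d)" by (auto simp: herm_def Jx_def Jminus_def Jplus_def)
lemma herm_Jy: "herm (Jy d)"
  unfolding herm_def Jy_def Jminus_def by (auto simp: Jplus_def field_simps)

lemma hs_cas: "hs_inner d (casimir_ad d A) B = hs_inner d A (casimir_ad d B)"
proof -
  have "casimir_ad d A = (\<lambda>i j. (\<lambda>i j. comm d (Jx d) (comm d (Jx d) A) i j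
                        + comm d (Jy d) (comm d (Jy d) A) i j) i j
                        + comm d (Jz d) (comm d (Jz d) A) i j)" by (simp add: casimir_ad_def)
  moreover have "casimir_ad d B = (\<lambda>i j. (\<lambda>i j. comm d (Jx d) (comm d (Jx d) B) i j
                        + comm d (Jy d) (comm d (Jy d) B) i j) i j
                        + comm d (Jz d) (comm d (Jz d) B) i j)" by (simp add: casimir_ad_def)
  ultimately show ?thesis
    by (simp only: hs_add_left hs_add_right hs_comm herm_Jx herm_Jy herm_Jz)
qed

lemma choose_step_nat: "Suc k * (n choose Suc k) = (n - k) * (n choose k)"
  by (metis binomial_absorption binomial_absorb_comp)

lemma choose_step: "real (Suc k) * real (n choose Suc k) = (real n - real k) * real (n choose k)"
proof (cases "k \<le> n")
  case True
  have "real (Suc k * (n choose Suc k)) = real ((n - k) * (n choose k))" by (simp only: choose_step_nat)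
  then show ?thesis using True by (simp add: of_nat_diff algebra_simps)
next
  case False
  then show ?thesis by (simp add: binomial_eq_0)
qed

definition Acf :: "nat \<Rightarrow> nat \<Rightarrow> real" where "Acf d k = real (d - k) * real (k + 1)"
definition Bcf :: "nat \<Rightarrow> nat \<Rightarrow> real" where "Bcf d k = real k * real (d + 1 - k)"

definition Lop :: "nat \<Rightarrow> (nat \<Rightarrow> real) \<Rightarrow> nat \<Rightarrow> real" where
  "Lop d f k = Acf d k * (f k - f (k + 1)) + Bcf d k * (f k - f (k - 1))"

lemma Lop_psi0: "Lop d (\<lambda>k. real (k choose 0)) k = 0"
  by (simp add: Lop_def)

lemma Lop_psi:
  assumes "k \<le> d"
  shows "Lop d (\<lambda>k. real (k choose Suc i)) k =
     real (Suc i) * real (Suc (Suc i)) * real (k choose Suc i) - real (Suc i) * (real d - real i) * real (k choose i)"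
proof (cases k)
  case 0
  then show ?thesis using assms by (cases i) (simp_all add: Lop_def Acf_def Bcf_def)
next
  case (Suc k')
  have p1: "real (Suc k choose Suc i) = real (k choose Suc i) + real (k choose i)" by simp
  have p2: "real (k choose Suc i) = real (k' choose Suc i) + real (k' choose i)" using Suc by simp
  have s1: "real (Suc k) * real (k choose i) = real (Suc i) * real (Suc k choose Suc i)"
    using Suc_times_binomial_eq[of k i] by (metis mult.commute of_nat_mult)
  have s2: "real k * real (k' choose i) = real (Suc i) * real (k choose Suc i)"
    using Suc_times_binomial_eq[of k' i] Suc by (metis mult.commute of_nat_mult)
  have s3: "(real k - real i) * real (k choose i) = real (Suc i) * real (k choose Suc i)"
    using choose_step[of i k] by simp
  have dk: "real (d - k) = real d - real k" "real (d + 1 - k) = real d + 1 - real k" using assms by (simp_all add: of_nat_diff)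
  have "Lop d (\<lambda>k. real (k choose Suc i)) k =
      - (real d - real k) * (real (k + 1) * real (k choose i)) + (real d + 1 - real k) * (real k * real (k' choose i))"
    unfolding Lop_def Acf_def Bcf_def dk using Suc p1 p2 by (simp add: algebra_simps)
  also have "\<dots> = - (real d - real k) * (real (Suc i) * (real (k choose Suc i) + real (k choose i)))
       + (real d + 1 - real k) * (real (Suc i) * real (k choose Suc i))"
    using s1 s2 p1 by simp
  also have "\<dots> = real (Suc i) * (real (k choose Suc i) - (real d - real i) * real (k choose i)
      + (real k - real i) * real (k choose i))"
    by (simp add: algebra_simps)
  also have "\<dots> = real (Suc i) * real (Suc (Suc i)) * real (k choose Suc i) - real (Suc i) * (real d - real i) * real (k choose i)"
    unfolding s3 by (simp add: algebra_simps)
  finally show ?thesis .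
qed

lemma Lop_psi_all:
  assumes "k \<le> d"
  shows "Lop d (\<lambda>k. real (k choose j)) k =
     real j * real (j + 1) * real (k choose j) - real j * (real d + 1 - real j) * real (k choose (j - 1))"
proof (cases j)
  case 0 then show ?thesis by (simp add: Lop_def)
next
  case (Suc i) then show ?thesis using Lop_psi[OF assms, of i] by (simp add: algebra_simps)
qed

lemma Lop_sum: "Lop d (\<lambda>k. \<Sum>j\<le>n. c j * f j k) k = (\<Sum>j\<le>n. c j * Lop d (f j) k)"
  unfolding Lop_def by (simp add: sum_distrib_left sum.distrib[symmetric] sum_subtractf[symmetric] algebra_simps)

definition cf :: "nat \<Rightarrow> nat \<Rightarrow> nat \<Rightarrow> real" where
  "cf d n j = (-1) ^ j * real (n choose j) * real ((n + j) choose j) / real (d choose j)"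

definition Q :: "nat \<Rightarrow> nat \<Rightarrow> nat \<Rightarrow> real" where
  "Q d n k = (\<Sum>j\<le>n. cf d n j * real (k choose j))"

lemma cf_rec:
  assumes "i < n" "n \<le> d"
  shows "cf d n (Suc i) * real (Suc i) * (real d - real i) = - cf d n i * (real n - real i) * (real n + real i + 1)"
proof -
  have e1: "real (Suc i) * real (n choose Suc i) = (real n - real i) * real (n choose i)" by (rule choose_step)
  have e2: "real (Suc i) * real (d choose Suc i) = (real d - real i) * real (d choose i)" by (rule choose_step)
  have e3: "real (Suc i) * real (Suc (n + i) choose Suc i) = (real n + real i + 1) * real ((n + i) choose i)"
  proof -
    have "real (Suc i * (Suc (n + i) choose Suc i)) = real (Suc (n + i) * ((n + i) choose i))"
      by (simp only: Suc_times_binomial)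
    then show ?thesis by (simp add: algebra_simps)
  qed
  have p1: "real (d choose i) > 0" "real (d choose Suc i) > 0" using assms by auto
  have "cf d n (Suc i) * real (Suc i) * (real d - real i) * real (d choose Suc i) * real (Suc i)
      = - ((-1) ^ i) * (real (Suc i) * real (n choose Suc i)) * (real (Suc i) * real (Suc (n + i) choose Suc i)) * (real d - real i)"
    unfolding cf_def using p1 by (simp add: field_simps)
  also have "\<dots> = - ((-1) ^ i) * ((real n - real i) * real (n choose i)) * ((real n + real i + 1) * real ((n + i) choose i)) * (real d - real i)"
    unfolding e1 e3 ..
  also have "\<dots> = - cf d n i * (real n - real i) * (real n + real i + 1) * (real (Suc i) * real (d choose Suc i))"
    unfolding e2 cf_def using p1 by (simp add: field_simps)
  finally have fin: "(cf d n (Suc i) * real (Suc i) * (real d - real i)) * (real (d choose Suc i) * real (Suc i))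
     = (- cf d n i * (real n - real i) * (real n + real i + 1)) * (real (d choose Suc i) * real (Suc i))"
    by (simp only: mult.assoc mult.commute mult.left_commute)
  have "real (d choose Suc i) * real (Suc i) \<noteq> 0" using p1 by simp
  then show ?thesis using fin by (simp only: mult_cancel_right) simp
qed

lemma Q_eigen:
  assumes "k \<le> d" "n \<le> d"
  shows "Lop d (Q d n) k = real n * (real n + 1) * Q d n k"
proof -
  have "Lop d (Q d n) k = (\<Sum>j\<le>n. cf d n j * Lop d (\<lambda>k. real (k choose j)) k)"
    unfolding Q_def[abs_def] by (rule Lop_sum)
  also have "\<dots> = (\<Sum>j\<le>n. cf d n j * (real j * real (j + 1)) * real (k choose j))
       - (\<Sum>j\<le>n. cf d n j * real j * (real d + 1 - real j) * real (k choose (j - 1)))"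
    using assms by (simp add: Lop_psi_all sum_subtractf[symmetric] algebra_simps)
  also have "(\<Sum>j\<le>n. cf d n j * real j * (real d + 1 - real j) * real (k choose (j - 1)))
      = (\<Sum>i<n. cf d n (Suc i) * real (Suc i) * (real d - real i) * real (k choose i))"
    unfolding lessThan_Suc_atMost[symmetric] sum.lessThan_Suc_shift by simp
  also have "\<dots> = (\<Sum>i<n. - cf d n i * (real n - real i) * (real n + real i + 1) * real (k choose i))"
    apply (rule sum.cong[OF refl])
    apply (subst cf_rec) using assms by auto
  also have "\<dots> = (\<Sum>i\<le>n. - cf d n i * (real n - real i) * (real n + real i + 1) * real (k choose i))"
    by (simp add: lessThan_Suc_atMost[symmetric])
  finally have "Lop d (Q d n) k = (\<Sum>j\<le>n. cf d n j * (real j * real (j + 1)) * real (k choose j)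
      + cf d n j * (real n - real j) * (real n + real j + 1) * real (k choose j))"
    by (simp add: sum.distrib sum_negf)
  also have "\<dots> = (\<Sum>j\<le>n. real n * (real n + 1) * (cf d n j * real (k choose j)))"
    by (rule sum.cong[OF refl]) (simp add: algebra_simps)
  also have "\<dots> = real n * (real n + 1) * Q d n k"
    unfolding Q_def by (simp add: sum_distrib_left)
  finally show ?thesis .
qed

lemma alt_sum: "(\<Sum>j\<le>n. (-1) ^ j * real (n choose j) * real ((n + j) choose j)) = (-1) ^ n"
proof -
  have "(\<Sum>j\<le>n. (-1) ^ j * real (n choose j) * real ((n + j) choose j))
      = (\<Sum>j=0..n. ((- (real n + 1)) gchoose j) * (real n gchoose (n - j)))"
  proof (rule sum.cong)
    show "{..n} = {0..n}" by auto
  next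
    fix j assume j: "j \<in> {0..n}"
    have "(- (real n + 1)) gchoose j = (-1) ^ j * ((real n + 1 + real j - 1) gchoose j)"
      by (rule gbinomial_minus)
    also have "real n + 1 + real j - 1 = real (n + j)" by simp
    finally have a: "(- (real n + 1)) gchoose j = (-1) ^ j * real ((n + j) choose j)"
      by (simp only: binomial_gbinomial)
    have b: "real n gchoose (n - j) = real (n choose j)"
      using j by (simp add: binomial_gbinomial[symmetric] binomial_symmetric[symmetric])
    show "(-1) ^ j * real (n choose j) * real ((n + j) choose j) = ((- (real n + 1)) gchoose j) * (real n gchoose (n - j))"
      unfolding a b by simp
  qed
  also have "\<dots> = (- (real n + 1) + real n) gchoose n" by (rule gbinomial_Vandermonde)
  also have "\<dots> = (-1) ^ n"
    using gbinomial_minus[of "1::real" n] by (simp add: binomial_gbinomial[symmetric])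
  finally show ?thesis .
qed

lemma Q_0: "Q d n 0 = 1"
proof -
  have "Q d n 0 = (\<Sum>j\<le>n. if j = 0 then cf d n 0 else 0)"
    unfolding Q_def by (rule sum.cong) auto
  then show ?thesis by (simp add: cf_def)
qed

lemma Q_d: "n \<le> d \<Longrightarrow> Q d n d = (-1) ^ n"
proof -
  assume nd: "n \<le> d"
  have "Q d n d = (\<Sum>j\<le>n. (-1) ^ j * real (n choose j) * real ((n + j) choose j))"
    unfolding Q_def cf_def by (rule sum.cong) (use nd in auto)
  then show ?thesis by (simp add: alt_sum)
qed

lemma unique_zero:
  assumes eig: "\<And>k. k < d \<Longrightarrow> Lop d f k = lam * f k" and f0: "f 0 = 0"
  shows "k \<le> d \<Longrightarrow> f k = 0"
proof -
  have main: "Suc k \<le> d \<Longrightarrow> f k = 0 \<and> f (Suc k) = 0" for k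
  proof (induction k)
    case 0
    have "Lop d f 0 = lam * f 0" using eig 0 by simp
    then have "real d * (0 - f 1) = 0" using f0 by (simp add: Lop_def Acf_def Bcf_def)
    then show ?case using 0 f0 by simp
  next
    case (Suc k)
    then have ih: "f k = 0" "f (Suc k) = 0" by auto
    have "Lop d f (Suc k) = lam * f (Suc k)" using eig Suc.prems by simp
    then have "Acf d (Suc k) * (0 - f (Suc (Suc k))) = 0" using ih by (simp add: Lop_def)
    moreover have "Acf d (Suc k) \<noteq> 0" using Suc.prems by (simp add: Acf_def)
    ultimately show ?case using ih by simp
  qed
  show "k \<le> d \<Longrightarrow> f k = 0"
    using main[of "k - 1"] f0 by (cases k) auto
qed

lemma Lop_lin: "Lop d (\<lambda>k. f k - c * g k) k = Lop d f k - c * Lop d g k"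
  unfolding Lop_def by (simp add: algebra_simps)

lemma Lop_refl:
  assumes "k \<le> d"
  shows "Lop d (\<lambda>k. f (d - k)) k = Lop d f (d - k)"
proof -
  consider "k = 0" | "k = d" "0 < d" | "0 < k" "k < d" using assms by linarith
  then show ?thesis
  proof cases
    case 1 then show ?thesis by (cases d) (simp_all add: Lop_def Acf_def Bcf_def algebra_simps)
  next
    case 2 then show ?thesis by (simp add: Lop_def Acf_def Bcf_def algebra_simps)
  next
    case 3
    then have e1: "d - (k + 1) = d - k - 1" "d - (k - 1) = d - k + 1" by auto
    show ?thesis using 3 unfolding Lop_def Acf_def Bcf_def e1
      by (simp add: of_nat_diff algebra_simps)
  qed
qed

lemma Q_sym:
  assumes "n \<le> d" "k \<le> d"
  shows "Q d n (d - k) = (-1) ^ n * Q d n k"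
proof -
  define g where "g = (\<lambda>k. Q d n (d - k) - (-1) ^ n * Q d n k)"
  have "g k = 0"
  proof (rule unique_zero[where lam = "real n * (real n + 1)"])
    fix k assume k: "k < d"
    have "Lop d g k = Lop d (\<lambda>k. Q d n (d - k)) k - (-1) ^ n * Lop d (Q d n) k"
      unfolding g_def by (rule Lop_lin)
    also have "\<dots> = Lop d (Q d n) (d - k) - (-1) ^ n * Lop d (Q d n) k"
      using k by (simp add: Lop_refl)
    also have "\<dots> = real n * (real n + 1) * g k"
      using k assms by (simp add: Q_eigen g_def algebra_simps)
    finally show "Lop d g k = real n * (real n + 1) * g k" .
  next
    show "g 0 = 0" using assms by (simp add: g_def Q_0 Q_d)
  next
    show "k \<le> d" by fact
  qed
  then show ?thesis by (simp add: g_def)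
qed

definition pp :: "nat \<Rightarrow> nat \<Rightarrow> real" where
  "pp d n = (2 * real n + 1) * (fact d)\<^sup>2 / (fact (d + n + 1) * fact (d - n))"

definition gg :: "nat \<Rightarrow> nat \<Rightarrow> nat \<Rightarrow> real" where
  "gg d j n = (if j \<le> n \<and> n < d then
     (fact d)\<^sup>2 / ((fact j)\<^sup>2 * real (d - j)) * fact (n + j + 1) / (fact (n - j) * fact (d + n + 1) * fact (d - n - 1))
   else 0)"

lemma tele: "(\<Sum>n\<le>(N::nat). v n - (if n = 0 then 0 else v (n - 1))) = (v N :: real)"
  by (induction N) simp_all

lemma binprod: "j \<le> n \<Longrightarrow> real (n choose j) * real ((n + j) choose j) = fact (n + j) / ((fact j)\<^sup>2 * fact (n - j))"
  by (simp add: binomial_fact power2_eq_square field_simps)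

lemma coreA:
  fixes j m r :: nat
  assumes n_def: "n = j + m" and d_def: "d = j + m + r + 1"
  shows "pp d n * real (n choose j) * real ((n + j) choose j) = gg d j n + (if 0 < m then gg d j (n - 1) else 0)"
proof -
  have e1: "d - n = Suc r" "n - j = m" "d - n - 1 = r" "d - j = m + r + 1" using n_def d_def by auto
  have jn: "j \<le> n" "n < d" using n_def d_def by auto
  have f1: "fact (n + j + 1) = real (n + j + 1) * fact (n + j)" by simp
  have f2: "fact (d + n + 1) = real (d + n + 1) * fact (d + n)" by simp
  have f3: "fact (Suc r) = real (Suc r) * fact r" by simp
  define X where "X = (fact (n + j) :: real)"
  define Y where "Y = (fact (d + n) :: real)"
  define Z where "Z = (fact r :: real)"
  define F where "F = (fact d :: real)"
  define G where "G = (fact j :: real)"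
  have pos: "X > 0" "Y > 0" "Z > 0" "F > 0" "G > 0" unfolding X_def Y_def Z_def F_def G_def by auto
  have lhs: "pp d n * real (n choose j) * real ((n + j) choose j)
     = (2 * real n + 1) * F\<^sup>2 / (real (d + n + 1) * Y * (real (Suc r) * Z)) * (X / (G\<^sup>2 * fact m))"
    unfolding pp_def mult.assoc[of _ "real (n choose j)"] binprod[OF jn(1)] e1 f2 f3 X_def Y_def Z_def F_def G_def ..
  have g1: "gg d j n = F\<^sup>2 / (G\<^sup>2 * real (m + r + 1)) * (real (n + j + 1) * X) / (fact m * (real (d + n + 1) * Y) * Z)"
    unfolding gg_def using jn unfolding e1 f1 f2 X_def Y_def Z_def F_def G_def by simp
  show ?thesis
  proof (cases m)
    case 0
    then show ?thesis unfolding lhs g1 using pos n_def d_def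
      by (simp add: field_simps)
  next
    case (Suc m')
    have e2: "n - 1 - j = m'" "d - (n - 1) - 1 = Suc r" "n - 1 + j + 1 = n + j" "d + (n - 1) + 1 = d + n"
      using n_def d_def Suc by auto
    have jn2: "j \<le> n - 1" "n - 1 < d" using n_def d_def Suc by auto
    have g2: "gg d j (n - 1) = F\<^sup>2 / (G\<^sup>2 * real (m + r + 1)) * X / (fact m' * Y * (real (Suc r) * Z))"
      unfolding gg_def using jn2 unfolding e1 e2 f3 X_def Y_def Z_def F_def G_def by simp
    have fm: "fact m = real m * fact m'" using Suc by simp
    have fm': "fact m' > (0::real)" by simp
    define R1 where "R1 = real (d + n + 1)"
    define R2 where "R2 = real (Suc r)"
    define R3 where "R3 = real m"
    define R4 where "R4 = real (m + r + 1)"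
    have nz: "R1 \<noteq> 0" "R2 \<noteq> 0" "R3 \<noteq> 0" "R4 \<noteq> 0" "X \<noteq> 0" "Y \<noteq> 0" "Z \<noteq> 0" "F \<noteq> 0" "G \<noteq> 0" "fact m' \<noteq> (0::real)"
      using pos Suc unfolding R1_def R2_def R3_def R4_def by auto
    have req: "R1 = real d + real n + 1" "R2 = real r + 1" "R3 = real m' + 1" "R4 = real m' + real r + 2"
      unfolding R1_def R2_def R3_def R4_def using Suc by auto
    show ?thesis unfolding lhs g1 g2 fm R1_def[symmetric] R2_def[symmetric] R3_def[symmetric] R4_def[symmetric]
      apply (simp add: field_simps nz)
      apply (simp add: req n_def d_def Suc algebra_simps)
      done
  qed
qed

lemma coreB:
  fixes j m' :: nat
  assumes d_def: "d = j + Suc m'"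
  shows "pp d d * real (d choose j) * real ((d + j) choose j) = gg d j (d - 1)"
proof -
  have jn: "j \<le> d" using d_def by simp
  have e: "d - j = Suc m'" "d - 1 - j = m'" "d - 1 + j + 1 = d + j" "d + (d - 1) + 1 = d + d" "d - (d - 1) - 1 = 0"
     "d - 1 < d" "j \<le> d - 1" "d - d = 0" using d_def by auto
  have f1: "fact (d + d + 1) = real (d + d + 1) * fact (d + d)" by simp
  have fm: "fact (Suc m') = real (Suc m') * fact m'" by simp
  define X where "X = (fact (d + j) :: real)"
  define Y where "Y = (fact (d + d) :: real)"
  define F where "F = (fact d :: real)"
  define G where "G = (fact j :: real)"
  define R1 where "R1 = real (d + d + 1)"
  define R3 where "R3 = real (Suc m')"
  have nz: "R1 \<noteq> 0" "R3 \<noteq> 0" "X \<noteq> 0" "Y \<noteq> 0" "F \<noteq> 0" "G \<noteq> 0" "fact m' \<noteq> (0::real)"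
    unfolding R1_def R3_def X_def Y_def F_def G_def by auto
  have lhs: "pp d d * real (d choose j) * real ((d + j) choose j)
     = (2 * real d + 1) * F\<^sup>2 / (R1 * Y * 1) * (X / (G\<^sup>2 * (R3 * fact m')))"
    unfolding pp_def mult.assoc[of _ "real (d choose j)"] binprod[OF jn] e f1 fm X_def Y_def F_def G_def R1_def R3_def
    by simp
  have g: "gg d j (d - 1) = F\<^sup>2 / (G\<^sup>2 * R3) * X / (fact m' * Y * 1)"
    unfolding gg_def if_P[OF conjI[OF e(7) e(6)]] e(1-5) X_def Y_def F_def G_def R3_def by simp
  have req: "R1 = 2 * real d + 1" unfolding R1_def by simp
  show ?thesis unfolding lhs g
    apply (simp add: field_simps nz)
    apply (simp add: req algebra_simps)
    done
qed

lemma core: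
  assumes "j < d" "n \<le> d"
  shows "pp d n * real (n choose j) * real ((n + j) choose j) = gg d j n + (if n = 0 then 0 else gg d j (n - 1))"
proof -
  consider "n < j" | "j \<le> n" "n < d" | "n = d" using assms by linarith
  then show ?thesis
  proof cases
    case 1
    then have "\<not> j \<le> n" "\<not> j \<le> n - 1" "n choose j = 0" by (auto simp: binomial_eq_0)
    then show ?thesis by (simp add: gg_def)
  next
    case 2
    have A: "pp d n * real (n choose j) * real ((n + j) choose j) = gg d j n + (if 0 < n - j then gg d j (n - 1) else 0)"
      by (rule coreA[of n j "n - j" d "d - n - 1"]) (use 2 in auto)
    show ?thesis
    proof (cases "n = j")
      case True then show ?thesis using A by (cases j) (auto simp: gg_def)
    next
      case False then show ?thesis using A 2 by simp
    qed
  next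
    case 3
    obtain m' where "d = j + Suc m'" using assms(1) by (metis add_Suc_right less_imp_Suc_add)
    then have B: "pp d d * real (d choose j) * real ((d + j) choose j) = gg d j (d - 1)" by (rule coreB)
    show ?thesis using 3 B assms by (simp add: gg_def)
  qed
qed

lemma U_lt:
  assumes "j < d"
  shows "(\<Sum>n\<le>d. (-1) ^ n * pp d n * real (n choose j) * real ((n + j) choose j)) = 0"
proof -
  define v where "v n = (-1) ^ n * gg d j n" for n
  have "(\<Sum>n\<le>d. (-1) ^ n * pp d n * real (n choose j) * real ((n + j) choose j))
      = (\<Sum>n\<le>d. v n - (if n = 0 then 0 else v (n - 1)))"
  proof (rule sum.cong[OF refl])
    fix n assume "n \<in> {..d}"
    then have n: "n \<le> d" by simp
    have "(-1) ^ n * pp d n * real (n choose j) * real ((n + j) choose j) = (-1) ^ n * (gg d j n + (if n = 0 then 0 else gg d j (n - 1)))"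
      using core[OF assms n] by (simp add: mult.assoc)
    also have "\<dots> = v n - (if n = 0 then 0 else v (n - 1))"
      by (cases n) (simp_all add: v_def algebra_simps)
    finally show "(-1) ^ n * pp d n * real (n choose j) * real ((n + j) choose j) = v n - (if n = 0 then 0 else v (n - 1))" .
  qed
  also have "\<dots> = v d" by (rule tele)
  also have "\<dots> = 0" by (simp add: v_def gg_def)
  finally show ?thesis .
qed

lemma pp_dd: "pp d d * real (d choose d) * real ((d + d) choose d) = 1"
proof -
  have b: "real ((d + d) choose d) = fact (d + d) / (fact d * fact d)"
    by (simp add: binomial_fact)
  have f: "fact (d + d + 1) = (2 * real d + 1) * (fact (d + d) :: real)" by simp
  have "pp d d = (2 * real d + 1) * (fact d * fact d) / ((2 * real d + 1) * fact (d + d))"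
    unfolding pp_def f by (simp add: power2_eq_square)
  also have "\<dots> = (fact d * fact d) / fact (d + d)"
    by (rule mult_divide_mult_cancel_left) simp
  finally have "pp d d = (fact d * fact d) / fact (d + d)" .
  then show ?thesis using b by simp
qed

lemma U_eq:
  "(\<Sum>n\<le>d. (-1) ^ n * pp d n * real (n choose d) * real ((n + d) choose d)) = (-1) ^ d"
proof -
  have "(\<Sum>n\<le>d. (-1) ^ n * pp d n * real (n choose d) * real ((n + d) choose d))
     = (\<Sum>n\<le>d. if n = d then (-1) ^ d * (pp d d * real (d choose d) * real ((d + d) choose d)) else 0)"
    by (rule sum.cong[OF refl]) (auto simp: mult.assoc)
  also have "\<dots> = (-1) ^ d" using pp_dd by simp
  finally show ?thesis .
qed

lemma Q_ext: "n \<le> d \<Longrightarrow> Q d n k = (\<Sum>j\<le>d. cf d n j * real (k choose j))"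
proof -
  assume nd: "n \<le> d"
  have "(\<Sum>j\<le>d. cf d n j * real (k choose j)) = (\<Sum>j\<le>n. cf d n j * real (k choose j)) + (\<Sum>j\<in>{n<..d}. cf d n j * real (k choose j))"
  proof -
    have "{..d} = {..n} \<union> {n<..d}" using nd by auto
    then show ?thesis by (subst sum.union_disjoint[symmetric]) auto
  qed
  moreover have "(\<Sum>j\<in>{n<..d}. cf d n j * real (k choose j)) = 0"
    by (rule sum.neutral) (auto simp: cf_def)
  ultimately show ?thesis unfolding Q_def by simp
qed

lemma inner_coef:
  assumes "j \<le> d"
  shows "(\<Sum>n\<le>d. (-1) ^ n * pp d n * cf d n j) = (if j = d then 1 else 0)"
proof -
  have "(\<Sum>n\<le>d. (-1) ^ n * pp d n * cf d n j) = (-1) ^ j / real (d choose j) *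
      (\<Sum>n\<le>d. (-1) ^ n * pp d n * real (n choose j) * real ((n + j) choose j))"
    unfolding cf_def sum_distrib_left by (rule sum.cong[OF refl]) (simp add: field_simps)
  also have "\<dots> = (if j = d then 1 else 0)"
  proof (cases "j = d")
    case True then show ?thesis using U_eq[of d] by (simp flip: power_add add: power_add[symmetric])
  next
    case False then show ?thesis using U_lt[of j d] assms by simp
  qed
  finally show ?thesis .
qed

lemma delta_d:
  assumes "k \<le> d"
  shows "(\<Sum>n\<le>d. (-1) ^ n * pp d n * Q d n k) = real (k choose d)"
proof -
  have "(\<Sum>n\<le>d. (-1) ^ n * pp d n * Q d n k) = (\<Sum>n\<le>d. \<Sum>j\<le>d. (-1) ^ n * pp d n * cf d n j * real (k choose j))"
    by (rule sum.cong[OF refl]) (simp add: Q_ext sum_distrib_left mult.assoc)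
  also have "\<dots> = (\<Sum>j\<le>d. \<Sum>n\<le>d. (-1) ^ n * pp d n * cf d n j * real (k choose j))"
    by (rule sum.swap)
  also have "\<dots> = (\<Sum>j\<le>d. (\<Sum>n\<le>d. (-1) ^ n * pp d n * cf d n j) * real (k choose j))"
    by (simp add: sum_distrib_right)
  also have "\<dots> = (\<Sum>j\<le>d. (if j = d then real (k choose j) else 0))"
    by (rule sum.cong[OF refl]) (simp add: inner_coef)
  also have "\<dots> = real (k choose d)" by simp
  finally show ?thesis .
qed

lemma delta_0:
  assumes "k \<le> d"
  shows "(\<Sum>n\<le>d. pp d n * Q d n k) = (if k = 0 then 1 else 0)"
proof -
  have "(\<Sum>n\<le>d. pp d n * Q d n k) = (\<Sum>n\<le>d. (-1) ^ n * pp d n * Q d n (d - k))"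
    by (rule sum.cong[OF refl]) (use assms in \<open>simp add: Q_sym power_add[symmetric] flip: power_add\<close>)
  also have "\<dots> = real ((d - k) choose d)" using delta_d[of "d - k" d] by simp
  also have "\<dots> = (if k = 0 then 1 else 0)" using assms by (auto simp: binomial_eq_0)
  finally show ?thesis .
qed

definition Ydiag :: "nat \<Rightarrow> (nat \<Rightarrow> real) \<Rightarrow> op" where
  "Ydiag d f = (\<lambda>i j. if i = j \<and> i \<le> d then complex_of_real (f i) else 0)"

lemma is_op_Ydiag: "is_op d (Ydiag d f)" by (auto simp: is_op_def Ydiag_def)

lemma aa_sq_A: "k \<le> d \<Longrightarrow> aa d k * aa d k = Acf d k"
  by (simp add: aa_sq Acf_def)
lemma aa_sq_B: "1 \<le> k \<Longrightarrow> k \<le> d \<Longrightarrow> aa d (k - 1) * aa d (k - 1) = Bcf d k"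
  by (simp add: aa_sq Bcf_def of_nat_diff)

lemma w_eq: "k \<le> d \<Longrightarrow> real d * (real d + 2) / 2 - 2 * mval d k * mval d k = Acf d k + Bcf d k"
  by (simp add: mval_def Acf_def Bcf_def of_nat_diff field_simps)

lemma Lop_scale: "Lop d (\<lambda>k. c * f k) k = c * Lop d f k"
  unfolding Lop_def by (simp add: algebra_simps)

lemma cas_Ydiag:
  assumes eig: "\<And>k. k \<le> d \<Longrightarrow> Lop d f k = lam * f k"
  shows "casimir_ad d (Ydiag d f) = (\<lambda>i j. complex_of_real lam * Ydiag d f i j)"
proof (intro ext)
  fix i j
  have c: "casimir_ad d (Ydiag d f) i j = cas_formula d (Ydiag d f) i j" by (rule cas_eq[OF is_op_Ydiag])
  show "casimir_ad d (Ydiag d f) i j = complex_of_real lam * Ydiag d f i j"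
  proof (cases "i \<le> d \<and> j \<le> d")
    case False
    have "cas_formula d (Ydiag d f) i j = 0" unfolding cas_formula_def by (subst if_not_P[OF False]) (rule refl)
    moreover have "Ydiag d f i j = 0" using False by (auto simp: Ydiag_def)
    ultimately show ?thesis unfolding c by simp
  next
    case True
    show ?thesis
    proof (cases "i = j")
      case False
      have z1: "Ydiag d f i j = 0" using False by (simp add: Ydiag_def)
      have z2: "(if 1 \<le> i \<and> 1 \<le> j then complex_of_real (aa d (i - 1) * aa d (j - 1)) * Ydiag d f (i - 1) (j - 1) else 0) = 0"
        using False by (auto simp: Ydiag_def)
      have z3: "(if i < d \<and> j < d then complex_of_real (aa d i * aa d j) * Ydiag d f (i + 1) (j + 1) else 0) = 0"
        using False by (simp add: Ydiag_def)
      have "cas_formula d (Ydiag d f) i j = 0"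
        using True unfolding cas_formula_def z1 z2 z3 by simp
      then show ?thesis unfolding c z1 by simp
    next
      case ij: True
      have id: "i \<le> d" using True by simp
      have L: "Acf d i * (f i - f (i + 1)) + Bcf d i * (f i - f (i - 1)) = lam * f i"
        using eig[OF id] by (simp add: Lop_def)
      have R: "(real d * (real d + 2) / 2 - 2 * mval d i * mval d i) * f i
           - (if 1 \<le> i then aa d (i - 1) * aa d (i - 1) * f (i - 1) else 0)
           - (if i < d then aa d i * aa d i * f (i + 1) else 0) = lam * f i"
      proof -
        have w: "real d * (real d + 2) / 2 - 2 * mval d i * mval d i = Acf d i + Bcf d i" by (rule w_eq[OF id])
        have e1: "(if 1 \<le> i then aa d (i - 1) * aa d (i - 1) * f (i - 1) else 0) = Bcf d i * f (i - 1)"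
          using aa_sq_B[of i d] id by (cases "1 \<le> i") (auto simp: Bcf_def)
        have e2: "(if i < d then aa d i * aa d i * f (i + 1) else 0) = Acf d i * f (i + 1)"
          using aa_sq_A[of i d] id by (cases "i < d") (auto simp: Acf_def)
        show ?thesis unfolding w e1 e2 using L by (simp add: algebra_simps)
      qed
      have "cas_formula d (Ydiag d f) i i = complex_of_real ((real d * (real d + 2) / 2 - 2 * mval d i * mval d i) * f i
           - (if 1 \<le> i then aa d (i - 1) * aa d (i - 1) * f (i - 1) else 0)
           - (if i < d then aa d i * aa d i * f (i + 1) else 0))"
        using id by (auto simp: cas_formula_def Ydiag_def)
      then have F: "cas_formula d (Ydiag d f) i i = complex_of_real (lam * f i)" unfolding R .
      show ?thesis unfolding c using F ij id by (simp add: Ydiag_def)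
    qed
  qed
qed

lemma hs_scale_left: "hs_inner d (\<lambda>i j. c * X i j) Y = cnj c * hs_inner d X Y"
  unfolding hs_inner_def by (simp add: sum_distrib_left algebra_simps)
lemma hs_scale_right: "hs_inner d X (\<lambda>i j. c * Y i j) = c * hs_inner d X Y"
  unfolding hs_inner_def by (simp add: sum_distrib_left algebra_simps)

lemma orth:
  assumes B: "B \<in> Lsub d \<alpha>" and Y: "casimir_ad d Y = (\<lambda>i j. complex_of_real mu * Y i j)"
    and ne: "mu \<noteq> real \<alpha> * (real \<alpha> + 1)"
  shows "hs_inner d B Y = 0"
proof -
  have cB: "casimir_ad d B = (\<lambda>i j. complex_of_real (real \<alpha> * (real \<alpha> + 1)) * B i j)"
    using B by (simp add: Lsub_def)
  have "hs_inner d (casimir_ad d B) Y = hs_inner d B (casimir_ad d Y)" by (rule hs_cas)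
  then have "complex_of_real (real \<alpha> * (real \<alpha> + 1)) * hs_inner d B Y = complex_of_real mu * hs_inner d B Y"
    unfolding cB Y hs_scale_left hs_scale_right by simp
  then have "(complex_of_real (real \<alpha> * (real \<alpha> + 1)) - complex_of_real mu) * hs_inner d B Y = 0"
    by (simp add: algebra_simps)
  moreover have "complex_of_real (real \<alpha> * (real \<alpha> + 1)) - complex_of_real mu \<noteq> 0"
    using ne by (metis eq_iff_diff_eq_0 of_real_eq_iff)
  ultimately show ?thesis by simp
qed

lemma corner:
  assumes B: "B \<in> Lsub d \<alpha>" and a: "\<alpha> < d"
  shows "B 0 d = 0" "B d 0 = 0"
proof -
  have op: "is_op d B" and cB: "casimir_ad d B = (\<lambda>i j. complex_of_real (real \<alpha> * (real \<alpha> + 1)) * B i j)"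
    using B by (simp_all add: Lsub_def)
  have w: "real d * (real d + 2) / 2 - 2 * mval d 0 * mval d d = real d * (real d + 1)"
    by (simp add: mval_def field_simps)
  have w2: "real d * (real d + 2) / 2 - 2 * mval d d * mval d 0 = real d * (real d + 1)"
    by (simp add: mval_def field_simps)
  have ne: "real d * (real d + 1) \<noteq> real \<alpha> * (real \<alpha> + 1)"
  proof -
    have "real \<alpha> * (real \<alpha> + 1) < real d * (real d + 1)"
      using a by (intro mult_strict_mono) auto
    then show ?thesis by simp
  qed
  have k: "\<And>x. complex_of_real (real d * (real d + 1)) * x = complex_of_real (real \<alpha> * (real \<alpha> + 1)) * x \<Longrightarrow> x = 0"
  proof -
    fix x assume "complex_of_real (real d * (real d + 1)) * x = complex_of_real (real \<alpha> * (real \<alpha> + 1)) * x"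
    then have "(complex_of_real (real d * (real d + 1)) - complex_of_real (real \<alpha> * (real \<alpha> + 1))) * x = 0"
      by (simp add: algebra_simps)
    moreover have "complex_of_real (real d * (real d + 1)) - complex_of_real (real \<alpha> * (real \<alpha> + 1)) \<noteq> 0"
      using ne by (metis eq_iff_diff_eq_0 of_real_eq_iff)
    ultimately show "x = 0" by simp
  qed
  have "casimir_ad d B 0 d = complex_of_real (real d * (real d + 1)) * B 0 d"
    unfolding cas_eq[OF op] cas_formula_def using w by simp
  then show "B 0 d = 0" using cB k by (metis)
  have "casimir_ad d B d 0 = complex_of_real (real d * (real d + 1)) * B d 0"
    unfolding cas_eq[OF op] cas_formula_def using w2 by simp
  then show "B d 0 = 0" using cB k by (metis)
qed

definition Dv :: "nat \<Rightarrow> nat \<Rightarrow> real" where "Dv d k = (if k = 0 \<or> k = d then 1/2 else 0)"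
definition Ec :: "nat \<Rightarrow> op" where
  "Ec d = (\<lambda>i j. (if i = 0 \<and> j = d then 1/2 else 0) + (if i = d \<and> j = 0 then 1/2 else 0))"
definition cc :: "nat \<Rightarrow> nat \<Rightarrow> real" where "cc d n = pp d n * (1 + (-1) ^ n) / 2"

lemma half_sq: "complex_of_real (1 / sqrt 2) * cnj (complex_of_real (1 / sqrt 2)) = 1/2"
proof -
  have "(1 / sqrt 2) * (1 / sqrt (2::real)) = 1/2" by (simp add: field_simps)
  then have "complex_of_real ((1 / sqrt 2) * (1 / sqrt 2)) = 1/2" by simp
  then show ?thesis by (simp only: complex_cnj_complex_of_real of_real_mult)
qed

lemma s2c: "complex_of_real (sqrt 2) * complex_of_real (sqrt 2) = 2"
proof -
  have "sqrt 2 * sqrt (2::real) = 2" by simp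
  then show ?thesis by (metis of_real_mult of_real_numeral)
qed

lemma rho_dec: "1 \<le> d \<Longrightarrow> rho_ghz d = (\<lambda>i j. Ec d i j + Ydiag d (Dv d) i j)"
  by (intro ext) (auto simp: rho_ghz_def ghz_def Ec_def Ydiag_def Dv_def half_sq s2c)

lemma hs_Ydiag_right: "hs_inner d B (Ydiag d f) = (\<Sum>k\<le>d. cnj (B k k) * complex_of_real (f k))"
proof -
  have "hs_inner d B (Ydiag d f) = (\<Sum>i\<le>d. \<Sum>j\<le>d. if j = i then cnj (B i i) * complex_of_real (f i) else 0)"
    unfolding hs_inner_def Ydiag_def by (intro sum.cong refl) auto
  also have "\<dots> = (\<Sum>i\<le>d. cnj (B i i) * complex_of_real (f i))"
    by (intro sum.cong refl) (simp add: sum_single)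
  finally show ?thesis .
qed

lemma hs_Ydiag_left: "hs_inner d (Ydiag d f) R = (\<Sum>k\<le>d. complex_of_real (f k) * R k k)"
proof -
  have "hs_inner d (Ydiag d f) R = (\<Sum>i\<le>d. \<Sum>j\<le>d. if j = i then complex_of_real (f i) * R i i else 0)"
    unfolding hs_inner_def Ydiag_def by (intro sum.cong refl) auto
  also have "\<dots> = (\<Sum>i\<le>d. complex_of_real (f i) * R i i)"
    by (intro sum.cong refl) (simp add: sum_single)
  finally show ?thesis .
qed

lemma hs_Ec: "B 0 d = 0 \<Longrightarrow> B d 0 = 0 \<Longrightarrow> hs_inner d B (Ec d) = 0"
  unfolding hs_inner_def Ec_def by (auto intro!: sum.neutral)

lemma lam_inj: "n \<noteq> a \<Longrightarrow> real n * (real n + 1) \<noteq> real a * (real a + 1)"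
proof -
  assume "n \<noteq> a"
  then consider "n < a" | "a < n" by linarith
  then show ?thesis
  proof cases
    case 1 then have "real n * (real n + 1) < real a * (real a + 1)" by (intro mult_strict_mono) auto
    then show ?thesis by simp
  next
    case 2 then have "real a * (real a + 1) < real n * (real n + 1)" by (intro mult_strict_mono) auto
    then show ?thesis by simp
  qed
qed

lemma cas_YQ: "n \<le> d \<Longrightarrow> casimir_ad d (Ydiag d (Q d n)) = (\<lambda>i j. complex_of_real (real n * (real n + 1)) * Ydiag d (Q d n) i j)"
  by (rule cas_Ydiag) (simp add: Q_eigen)

lemma Dv_exp:
  assumes "1 \<le> d" "k \<le> d"
  shows "Dv d k = (\<Sum>n\<le>d. cc d n * Q d n k)"
proof -
  have "(\<Sum>n\<le>d. cc d n * Q d n k) = ((\<Sum>n\<le>d. pp d n * Q d n k) + (\<Sum>n\<le>d. (-1) ^ n * pp d n * Q d n k)) / 2"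
    unfolding cc_def sum.distrib[symmetric] sum_divide_distrib by (intro sum.cong refl) (simp add: algebra_simps)
  also have "\<dots> = ((if k = 0 then 1 else 0) + real (k choose d)) / 2"
    using delta_0[OF assms(2)] delta_d[OF assms(2)] by simp
  also have "\<dots> = Dv d k"
    using assms by (cases "k = d") (auto simp: Dv_def binomial_eq_0)
  finally show ?thesis ..
qed

lemma hs_B_D:
  assumes B: "B \<in> Lsub d \<alpha>" and a: "\<alpha> < d" and d1: "1 \<le> d"
  shows "hs_inner d B (Ydiag d (Dv d)) = complex_of_real (cc d \<alpha>) * hs_inner d B (Ydiag d (Q d \<alpha>))"
proof -
  have "hs_inner d B (Ydiag d (Dv d)) = (\<Sum>k\<le>d. cnj (B k k) * complex_of_real (\<Sum>n\<le>d. cc d n * Q d n k))"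
    unfolding hs_Ydiag_right by (intro sum.cong refl) (simp add: Dv_exp[OF d1])
  also have "\<dots> = (\<Sum>k\<le>d. \<Sum>n\<le>d. complex_of_real (cc d n) * (cnj (B k k) * complex_of_real (Q d n k)))"
    by (simp add: sum_distrib_left mult_ac)
  also have "\<dots> = (\<Sum>n\<le>d. \<Sum>k\<le>d. complex_of_real (cc d n) * (cnj (B k k) * complex_of_real (Q d n k)))"
    by (rule sum.swap)
  also have "\<dots> = (\<Sum>n\<le>d. complex_of_real (cc d n) * hs_inner d B (Ydiag d (Q d n)))"
    by (simp add: hs_Ydiag_right sum_distrib_left)
  also have "\<dots> = (\<Sum>n\<le>d. if n = \<alpha> then complex_of_real (cc d \<alpha>) * hs_inner d B (Ydiag d (Q d \<alpha>)) else 0)"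
  proof (intro sum.cong refl)
    fix n assume n: "n \<in> {..d}"
    show "complex_of_real (cc d n) * hs_inner d B (Ydiag d (Q d n)) = (if n = \<alpha> then complex_of_real (cc d \<alpha>) * hs_inner d B (Ydiag d (Q d \<alpha>)) else 0)"
    proof (cases "n = \<alpha>")
      case False
      have "hs_inner d B (Ydiag d (Q d n)) = 0"
        by (rule orth[OF B cas_YQ lam_inj[OF False]]) (use n in simp)
      then show ?thesis using False by simp
    qed simp
  qed
  also have "\<dots> = complex_of_real (cc d \<alpha>) * hs_inner d B (Ydiag d (Q d \<alpha>))"
    using a by (simp add: sum_single)
  finally show ?thesis .
qed

definition Xop :: "nat \<Rightarrow> nat \<Rightarrow> op" where "Xop d \<alpha> = Ydiag d (\<lambda>k. cc d \<alpha> * Q d \<alpha> k)"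

lemma hs_B_X: "hs_inner d B (Xop d \<alpha>) = complex_of_real (cc d \<alpha>) * hs_inner d B (Ydiag d (Q d \<alpha>))"
  unfolding Xop_def hs_Ydiag_right by (simp add: sum_distrib_left mult_ac)

lemma main_inner:
  assumes B: "B \<in> Lsub d \<alpha>" and a: "\<alpha> < d"
  shows "hs_inner d B (rho_ghz d) = hs_inner d B (Xop d \<alpha>)"
proof -
  have d1: "1 \<le> d" using a by simp
  have c: "B 0 d = 0" "B d 0 = 0" using corner[OF B a] by auto
  show ?thesis
    unfolding rho_dec[OF d1] hs_add_right hs_Ec[OF c] hs_B_D[OF B a d1] hs_B_X by simp
qed

lemma X_in: "\<alpha> < d \<Longrightarrow> Xop d \<alpha> \<in> Lsub d \<alpha>"
proof -
  assume a: "\<alpha> < d"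
  have "casimir_ad d (Xop d \<alpha>) = (\<lambda>i j. complex_of_real (real \<alpha> * (real \<alpha> + 1)) * Xop d \<alpha> i j)"
    unfolding Xop_def
  proof (rule cas_Ydiag)
    fix k assume k: "k \<le> d"
    show "Lop d (\<lambda>k. cc d \<alpha> * Q d \<alpha> k) k = real \<alpha> * (real \<alpha> + 1) * (cc d \<alpha> * Q d \<alpha> k)"
      unfolding Lop_scale using Q_eigen[OF k, of \<alpha>] a by simp
  qed
  then show ?thesis by (simp add: Lsub_def Xop_def is_op_Ydiag)
qed

lemma X_rho: "\<alpha> < d \<Longrightarrow> hs_inner d (Xop d \<alpha>) (rho_ghz d) = complex_of_real (cc d \<alpha> * (1 + (-1) ^ \<alpha>) / 2)"
proof -
  assume a: "\<alpha> < d"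
  have d1: "1 \<le> d" using a by simp
  have rkk: "rho_ghz d k k = complex_of_real (Dv d k)" if "k \<le> d" for k
    using that d1 unfolding rho_dec[OF d1] by (auto simp: Ec_def Ydiag_def)
  have "hs_inner d (Xop d \<alpha>) (rho_ghz d) = (\<Sum>k\<le>d. complex_of_real (cc d \<alpha> * Q d \<alpha> k * Dv d k))"
    unfolding Xop_def hs_Ydiag_left by (intro sum.cong refl) (simp add: rkk)
  also have "\<dots> = complex_of_real (\<Sum>k\<le>d. (if k = 0 then cc d \<alpha> * Q d \<alpha> 0 / 2 else 0) + (if k = d then cc d \<alpha> * Q d \<alpha> d / 2 else 0))"
    unfolding of_real_sum using d1 by (intro sum.cong refl) (auto simp: Dv_def)
  also have "\<dots> = complex_of_real (cc d \<alpha> * Q d \<alpha> 0 / 2 + cc d \<alpha> * Q d \<alpha> d / 2)"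
    by (simp add: sum.distrib sum_single)
  also have "\<dots> = complex_of_real (cc d \<alpha> * (1 + (-1) ^ \<alpha>) / 2)"
    using a by (simp add: Q_0 Q_d algebra_simps)
  finally show ?thesis .
qed

lemma hs_sum_right: "hs_inner d A (\<lambda>i j. \<Sum>\<mu>\<in>S. c \<mu> * F \<mu> i j) = (\<Sum>\<mu>\<in>S. c \<mu> * hs_inner d A (F \<mu>))"
proof -
  have "hs_inner d A (\<lambda>i j. \<Sum>\<mu>\<in>S. c \<mu> * F \<mu> i j) = (\<Sum>i\<le>d. \<Sum>j\<le>d. \<Sum>\<mu>\<in>S. c \<mu> * (cnj (A i j) * F \<mu> i j))"
    unfolding hs_inner_def by (simp add: sum_distrib_left mult_ac)
  also have "\<dots> = (\<Sum>i\<le>d. \<Sum>\<mu>\<in>S. \<Sum>j\<le>d. c \<mu> * (cnj (A i j) * F \<mu> i j))"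
    by (intro sum.cong refl) (rule sum.swap)
  also have "\<dots> = (\<Sum>\<mu>\<in>S. \<Sum>i\<le>d. \<Sum>j\<le>d. c \<mu> * (cnj (A i j) * F \<mu> i j))"
    by (rule sum.swap)
  also have "\<dots> = (\<Sum>\<mu>\<in>S. c \<mu> * hs_inner d A (F \<mu>))"
    unfolding hs_inner_def by (simp add: sum_distrib_left)
  finally show ?thesis .
qed

lemma hs_sum_left: "hs_inner d (\<lambda>i j. \<Sum>\<mu>\<in>S. c \<mu> * F \<mu> i j) R = (\<Sum>\<mu>\<in>S. cnj (c \<mu>) * hs_inner d (F \<mu>) R)"
proof -
  have "hs_inner d (\<lambda>i j. \<Sum>\<mu>\<in>S. c \<mu> * F \<mu> i j) R = (\<Sum>i\<le>d. \<Sum>j\<le>d. \<Sum>\<mu>\<in>S. cnj (c \<mu>) * (cnj (F \<mu> i j) * R i j))"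
    unfolding hs_inner_def by (simp add: sum_distrib_left mult_ac)
  also have "\<dots> = (\<Sum>i\<le>d. \<Sum>\<mu>\<in>S. \<Sum>j\<le>d. cnj (c \<mu>) * (cnj (F \<mu> i j) * R i j))"
    by (intro sum.cong refl) (rule sum.swap)
  also have "\<dots> = (\<Sum>\<mu>\<in>S. \<Sum>i\<le>d. \<Sum>j\<le>d. cnj (c \<mu>) * (cnj (F \<mu> i j) * R i j))"
    by (rule sum.swap)
  also have "\<dots> = (\<Sum>\<mu>\<in>S. cnj (c \<mu>) * hs_inner d (F \<mu>) R)"
    unfolding hs_inner_def by (simp add: sum_distrib_left)
  finally show ?thesis .
qed

lemma gfd_value:
  assumes a: "\<alpha> < d" and onb: "hs_onb d (Lsub d \<alpha>) Bs"
  shows "gfd_sum d Bs (rho_ghz d) = cc d \<alpha> * (1 + (-1) ^ \<alpha>) / 2"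
proof -
  let ?V = "Lsub d \<alpha>" and ?X = "Xop d \<alpha>" and ?n = "length Bs"
  have sub: "set Bs \<subseteq> ?V" and on: "\<And>\<mu> \<nu>. \<mu> < ?n \<Longrightarrow> \<nu> < ?n \<Longrightarrow> hs_inner d (Bs ! \<mu>) (Bs ! \<nu>) = (if \<mu> = \<nu> then 1 else 0)"
    and sp: "\<And>A. A \<in> ?V \<Longrightarrow> \<exists>c. A = (\<lambda>i j. \<Sum>\<mu><?n. c \<mu> * (Bs ! \<mu>) i j)"
    using onb unfolding hs_onb_def by auto
  obtain c where Xc: "?X = (\<lambda>i j. \<Sum>\<mu><?n. c \<mu> * (Bs ! \<mu>) i j)" using sp[OF X_in[OF a]] by blast
  have cmu: "hs_inner d (Bs ! \<mu>) ?X = c \<mu>" if mu: "\<mu> < ?n" for \<mu>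
  proof -
    have "hs_inner d (Bs ! \<mu>) ?X = (\<Sum>\<nu><?n. c \<nu> * hs_inner d (Bs ! \<mu>) (Bs ! \<nu>))"
      by (subst Xc) (rule hs_sum_right)
    also have "\<dots> = (\<Sum>\<nu><?n. if \<nu> = \<mu> then c \<mu> else 0)"
      by (intro sum.cong refl) (use mu on in auto)
    also have "\<dots> = c \<mu>" using mu by simp
    finally show ?thesis .
  qed
  have rmu: "hs_inner d (Bs ! \<mu>) (rho_ghz d) = c \<mu>" if mu: "\<mu> < ?n" for \<mu>
  proof -
    have "Bs ! \<mu> \<in> ?V" using sub mu by auto
    then show ?thesis using main_inner[OF _ a] cmu[OF mu] by simp
  qed
  have "gfd_sum d Bs (rho_ghz d) = (\<Sum>\<mu><?n. (cmod (c \<mu>))\<^sup>2)"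
    unfolding gfd_sum_def by (intro sum.cong refl) (simp add: rmu)
  moreover have "complex_of_real (\<Sum>\<mu><?n. (cmod (c \<mu>))\<^sup>2) = hs_inner d ?X ?X"
  proof -
    have "hs_inner d ?X ?X = (\<Sum>\<mu><?n. cnj (c \<mu>) * hs_inner d (Bs ! \<mu>) ?X)"
      by (subst (1) Xc) (rule hs_sum_left)
    also have "\<dots> = (\<Sum>\<mu><?n. cnj (c \<mu>) * c \<mu>)"
      by (intro sum.cong refl) (simp add: cmu)
    also have "\<dots> = complex_of_real (\<Sum>\<mu><?n. (cmod (c \<mu>))\<^sup>2)"
      unfolding of_real_sum by (intro sum.cong refl) (metis complex_norm_square mult.commute)
    finally show ?thesis ..
  qed
  moreover have "hs_inner d ?X ?X = hs_inner d ?X (rho_ghz d)"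
    using main_inner[OF X_in[OF a] a] by simp
  ultimately have "complex_of_real (gfd_sum d Bs (rho_ghz d)) = complex_of_real (cc d \<alpha> * (1 + (-1) ^ \<alpha>) / 2)"
    using X_rho[OF a] by simp
  then show ?thesis by (simp only: of_real_eq_iff)
qed

lemma hf2: "hf (2 * int x) = fact x"
  by (simp add: hf_def)

lemma hfm: "b \<le> a \<Longrightarrow> hf (2 * int a - 2 * int b) = fact (a - b)"
proof -
  assume "b \<le> a"
  then have "2 * int a - 2 * int b = 2 * int (a - b)" by simp
  then show ?thesis by (simp only: hf2)
qed
lemma hf3: "hf (2 * int a + 2 * int b + 2) = fact (a + b + 1)"
proof -
  have "2 * int a + 2 * int b + 2 = 2 * int (a + b + 1)" by simp
  then show ?thesis by (simp only: hf2)
qed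
lemma hf0: "hf 0 = 1" by (simp add: hf_def)

lemma cg_sq:
  assumes a: "\<alpha> < d"
  shows "(cg (int d) (int d) (2 * int \<alpha>) (int d) (- int d) 0)\<^sup>2 = pp d \<alpha>"
proof -
  have v: "cg_valid (int d) (int d) (2 * int \<alpha>) (int d) (- int d) 0"
    using a by (simp add: cg_valid_def)
  have S: "{k::nat. 2 * int k \<le> int d + int d - 2 * int \<alpha> \<and> 2 * int k \<le> int d - int d \<and>
                       2 * int k \<le> int d + - int d \<and> 0 \<le> 2 * int \<alpha> - int d + int d + 2 * int k \<and>
                       0 \<le> 2 * int \<alpha> - int d - - int d + 2 * int k} = {0}"
    using a by auto
  have h1: "2 * int \<alpha> + int d - int d = 2 * int \<alpha>" "2 * int \<alpha> - int d + int d = 2 * int \<alpha>"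
    "int d + int d - 2 * int \<alpha> = 2 * int (d - \<alpha>)" "int d + int d + 2 * int \<alpha> + 2 = 2 * int (d + \<alpha> + 1)"
    "2 * int \<alpha> + 0 = 2 * int \<alpha>" "2 * int \<alpha> - 0 = 2 * int \<alpha>" "int d - int d = 2 * int 0" "int d + int d = 2 * int d"
    "int d - - int d = 2 * int d" "int d + - int d = 2 * int 0"
    "int d + int d - 2 * int \<alpha> - 2 * int 0 = 2 * int (d - \<alpha>)" "int d - int d - 2 * int 0 = 2 * int 0"
    "int d + - int d - 2 * int 0 = 2 * int 0" "2 * int \<alpha> - int d + int d + 2 * int 0 = 2 * int \<alpha>"
    "2 * int \<alpha> - int d - - int d + 2 * int 0 = 2 * int \<alpha>"
    using a by auto
  define fa where "fa = (fact \<alpha> :: real)"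
  define fb where "fb = (fact (d - \<alpha>) :: real)"
  define fF where "fF = (fact d :: real)"
  define fG where "fG = (fact (d + \<alpha> + 1) :: real)"
  have nz: "fa \<noteq> 0" "fb \<noteq> 0" "fF \<noteq> 0" "fG \<noteq> 0" unfolding fa_def fb_def fF_def fG_def by auto
  define P1 where "P1 = real_of_int (2 * int \<alpha> + 1) * fa * fa * fb / fG"
  define P2 where "P2 = fa * fa * 1 * fF * fF * (1 :: real)"
  define T where "T = (1::real) / (1 * fb * 1 * 1 * fa * fa)"
  have cgv: "cg (int d) (int d) (2 * int \<alpha>) (int d) (- int d) 0 = sqrt P1 * sqrt P2 * T"
    apply (unfold cg_def if_P[OF v] S)
    apply (simp only: sum.insert[OF finite.emptyI] empty_iff not_False_eq_True sum.empty add_0_right)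
    apply (simp only: h1 hf2)
    using a apply (simp add: P1_def P2_def T_def hfm hf3 hf0 hf2 fa_def fb_def fF_def fG_def)
    done
  have p: "0 \<le> P1" "0 \<le> P2" unfolding P1_def P2_def fa_def fb_def fF_def fG_def by auto
  have "(cg (int d) (int d) (2 * int \<alpha>) (int d) (- int d) 0)\<^sup>2 = P1 * P2 * T\<^sup>2"
    unfolding cgv power_mult_distrib using p by simp
  also have "\<dots> = (2 * real \<alpha> + 1) * fF\<^sup>2 / (fG * fb)"
    unfolding P1_def P2_def T_def using nz by (simp add: field_simps power2_eq_square)
  also have "\<dots> = pp d \<alpha>"
    unfolding pp_def fF_def fG_def fb_def ..
  finally show ?thesis .
qed

theorem mainTheorem12:
  fixes d \<alpha> :: nat and Bs :: "op list"
  assumes "1 \<le> d"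
    and "\<alpha> < d"
    and "hs_onb d (Lsub d \<alpha>) Bs"
  shows "gfd_sum d Bs (rho_ghz d) =
           (if even \<alpha> then (cg (int d) (int d) (2 * int \<alpha>) (int d) (- int d) 0)\<^sup>2 else 0)"
proof (cases "even \<alpha>")
  case True
  then show ?thesis by (simp add: gfd_value[OF assms(2,3)] cg_sq[OF assms(2)] cc_def)
next
  case False
  then show ?thesis by (simp add: gfd_value[OF assms(2,3)] cc_def)
qed

end
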